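(* Let $(P,\omega)$ be a labeled poset of size $p$ and let $s\in P$. Then, as formal power series in $q$, $$G_{P,\omega;s}(q)=\frac{e_q^{\mathrm{maj}}(P,\omega;s)}{\prod_{i=1}^{p}(1-q^i)}.$$
   Context: $\mathbb{N}=\{0,1,2,\dots\}$; $\omega:P\to[p]$ is a bijection. A $(P,\omega)$-partition is a map $f:P\to\mathbb{N}$ with $f(x)\ge f(y)$ whenever $x\le y$, and $f(x)>f(y)$ whenever $x\le y$ and $\omega(x)>\omega(y)$. A $(P,\omega;s)$-partition is a $(P,\omega)$-partition $f$ with $f(s)\le f(t)$ for all $t\in P$ and such that $f(s)=f(t)$, $t\ne s$, implies $\omega(s)>\omega(t)$. $G_{P,\omega;s}(q)=\sum_{m\ge0}a(m)q^m$, where $a(m)$ is the number of $(P,\omega;s)$-partitions $f$ with $\sum_{t\in P}f(t)=m$. For a linear extension (order-preserving bijection) $g:P\to[p]$, its word is $\sigma=\omega\circ g^{-1}=\sigma_1\cdots\sigma_p$, and $\mathrm{maj}(\sigma)=\sum_{i:\sigma_i>\sigma_{i+1}}i$. $e_q^{\mathrm{maj}}(P,\omega;s)=\sum q^{\mathrm{maj}(\sigma)}$, summed over words $\sigma$ of linear extensions with $\sigma_p=\omega(s)$. *)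

theory Defs
  imports "HOL-Computational_Algebra.Formal_Power_Series"
begin

definition labeled_poset :: "('a \<Rightarrow> 'a \<Rightarrow> bool) \<Rightarrow> 'a set \<Rightarrow> ('a \<Rightarrow> nat) \<Rightarrow> bool" where
  "labeled_poset le P \<omega> \<longleftrightarrow> finite P
     \<and> (\<forall>x\<in>P. le x x)
     \<and> (\<forall>x\<in>P. \<forall>y\<in>P. le x y \<and> le y x \<longrightarrow> x = y)
     \<and> (\<forall>x\<in>P. \<forall>y\<in>P. \<forall>z\<in>P. le x y \<and> le y z \<longrightarrow> le x z)
     \<and> bij_betw \<omega> P {1..card P}"

definition P_omega_partition :: "('a \<Rightarrow> 'a \<Rightarrow> bool) \<Rightarrow> 'a set \<Rightarrow> ('a \<Rightarrow> nat) \<Rightarrow> ('a \<Rightarrow> nat) \<Rightarrow> bool" where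
  "P_omega_partition le P \<omega> f \<longleftrightarrow>
     (\<forall>x. x \<notin> P \<longrightarrow> f x = 0)
     \<and> (\<forall>x\<in>P. \<forall>y\<in>P. le x y \<longrightarrow> f x \<ge> f y)
     \<and> (\<forall>x\<in>P. \<forall>y\<in>P. le x y \<and> \<omega> x > \<omega> y \<longrightarrow> f x > f y)"

definition P_omega_s_partition :: "('a \<Rightarrow> 'a \<Rightarrow> bool) \<Rightarrow> 'a set \<Rightarrow> ('a \<Rightarrow> nat) \<Rightarrow> 'a \<Rightarrow> ('a \<Rightarrow> nat) \<Rightarrow> bool" where
  "P_omega_s_partition le P \<omega> s f \<longleftrightarrow>
     P_omega_partition le P \<omega> f
     \<and> (\<forall>t\<in>P. f s \<le> f t)
     \<and> (\<forall>t\<in>P. f s = f t \<and> t \<noteq> s \<longrightarrow> \<omega> s > \<omega> t)"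

definition G_fps :: "('a \<Rightarrow> 'a \<Rightarrow> bool) \<Rightarrow> 'a set \<Rightarrow> ('a \<Rightarrow> nat) \<Rightarrow> 'a \<Rightarrow> rat fps" where
  "G_fps le P \<omega> s = Abs_fps (\<lambda>m. of_nat (card
      {f. P_omega_s_partition le P \<omega> s f \<and> (\<Sum>t\<in>P. f t) = m}))"

definition linear_extension :: "('a \<Rightarrow> 'a \<Rightarrow> bool) \<Rightarrow> 'a set \<Rightarrow> ('a \<Rightarrow> nat) \<Rightarrow> bool" where
  "linear_extension le P g \<longleftrightarrow>
     (\<forall>x. x \<notin> P \<longrightarrow> g x = 0)
     \<and> bij_betw g P {1..card P}
     \<and> (\<forall>x\<in>P. \<forall>y\<in>P. le x y \<longrightarrow> g x \<le> g y)"

definition word :: "'a set \<Rightarrow> ('a \<Rightarrow> nat) \<Rightarrow> ('a \<Rightarrow> nat) \<Rightarrow> nat \<Rightarrow> nat" where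
  "word P \<omega> g i = \<omega> (inv_into P g i)"

definition maj :: "nat \<Rightarrow> (nat \<Rightarrow> nat) \<Rightarrow> nat" where
  "maj p \<sigma> = (\<Sum>i\<in>{i\<in>{1..<p}. \<sigma> i > \<sigma> (Suc i)}. i)"

text \<open>e_q^maj(P,omega;s): sum over words of linear extensions with sigma_p = omega(s).
  Distinct linear extensions give distinct words, so we sum over the set of words.\<close>
definition e_maj :: "('a \<Rightarrow> 'a \<Rightarrow> bool) \<Rightarrow> 'a set \<Rightarrow> ('a \<Rightarrow> nat) \<Rightarrow> 'a \<Rightarrow> rat fps" where
  "e_maj le P \<omega> s = (\<Sum>\<sigma>\<in>{\<sigma>. \<exists>g. linear_extension le P g \<and> \<sigma> = word P \<omega> g}
       \<inter> {\<sigma>. \<sigma> (card P) = \<omega> s}. fps_X ^ maj (card P) \<sigma>)"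

end

theory Submission
  imports Defs
begin

unbundle fps_syntax



lemma finite_bounded_funs:
  assumes "finite A"
  shows "finite {f :: 'a \<Rightarrow> nat. (\<forall>x. x \<notin> A \<longrightarrow> f x = 0) \<and> (\<forall>x\<in>A. f x \<le> m)}"
proof -
  have "{f :: 'a \<Rightarrow> nat. (\<forall>x. x \<notin> A \<longrightarrow> f x = 0) \<and> (\<forall>x\<in>A. f x \<le> m)}
      \<subseteq> (\<lambda>h x. if x \<in> A then h x else 0) ` (PiE A (\<lambda>_. {0..m}))"
  proof
    fix f :: "'a \<Rightarrow> nat" assume f: "f \<in> {f. (\<forall>x. x \<notin> A \<longrightarrow> f x = 0) \<and> (\<forall>x\<in>A. f x \<le> m)}"
    have "restrict f A \<in> PiE A (\<lambda>_. {0..m})" using f by auto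
    moreover have "f = (\<lambda>x. if x \<in> A then restrict f A x else 0)" using f by auto
    ultimately show "f \<in> (\<lambda>h x. if x \<in> A then h x else 0) ` (PiE A (\<lambda>_. {0..m}))" by blast
  qed
  moreover have "finite (PiE A (\<lambda>_. {0..m::nat}))" using assms by (simp add: finite_PiE)
  ultimately show ?thesis by (meson finite_imageI finite_subset)
qed

definition S :: "nat \<Rightarrow> nat set \<Rightarrow> nat \<Rightarrow> (nat \<Rightarrow> nat) set" where
  "S q D m = {h. (\<forall>i. i \<notin> {1..q} \<longrightarrow> h i = 0)
     \<and> (\<forall>i\<in>{1..q}. h (Suc i) \<le> h i \<and> (i \<in> D \<longrightarrow> h (Suc i) < h i))
     \<and> sum h {1..q} = m}"

lemma finite_S: "finite (S q D m)"
proof -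
  have "S q D m \<subseteq> {f. (\<forall>x. x \<notin> {1..q} \<longrightarrow> f x = 0) \<and> (\<forall>x\<in>{1..q}. f x \<le> m)}"
    unfolding S_def using member_le_sum[of _ "{1..q}"] by fastforce
  thus ?thesis using finite_bounded_funs[of "{1..q}" m] finite_subset by blast
qed

lemma S_mono:
  fixes h :: "nat \<Rightarrow> nat"
  assumes "\<forall>i\<in>{1..q}. h (Suc i) \<le> h i" "1 \<le> i" "i \<le> j" "j \<le> q"
  shows "h j \<le> h i"
  using assms(3,4)
proof (induction j)
  case 0 then show ?case using assms(2) by simp
next
  case (Suc j)
  show ?case
  proof (cases "i = Suc j")
    case False
    then have "h j \<le> h i" using Suc by simp
    moreover have "h (Suc j) \<le> h j" using assms(1) Suc.prems False \<open>1 \<le> i\<close> by auto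
    ultimately show ?thesis by linarith
  qed simp
qed

definition plus1 :: "nat \<Rightarrow> (nat \<Rightarrow> nat) \<Rightarrow> nat \<Rightarrow> nat" where
  "plus1 q h = (\<lambda>i. if i \<in> {1..q} then h i + 1 else 0)"

lemma S_pos_part:
  assumes "D \<subseteq> {1..q}" "q \<le> m" "1 \<le> q"
  shows "{h \<in> S q D m. 0 < h q} = plus1 q ` S q (D - {q}) (m - q)"
proof
  show "{h \<in> S q D m. 0 < h q} \<subseteq> plus1 q ` S q (D - {q}) (m - q)"
  proof
    fix h assume h: "h \<in> {h \<in> S q D m. 0 < h q}"
    define h' where "h' = (\<lambda>i. if i \<in> {1..q} then h i - 1 else 0)"
    have pos: "\<forall>i\<in>{1..q}. 0 < h i"
    proof
      fix i assume "i \<in> {1..q}"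
      then have "h q \<le> h i" using S_mono[of q h i q] h unfolding S_def by auto
      then show "0 < h i" using h by simp
    qed
    have "h = plus1 q h'" unfolding plus1_def h'_def using h pos unfolding S_def by fastforce
    moreover have "h' \<in> S q (D - {q}) (m - q)"
    proof -
      have "sum h {1..q} = sum (\<lambda>i. h' i + 1) {1..q}" 
        using pos unfolding h'_def by (intro sum.cong) auto
      also have "\<dots> = sum h' {1..q} + sum (\<lambda>i. 1) {1..q}" by (rule sum.distrib)
      also have "\<dots> = sum h' {1..q} + q" by simp
      finally have "sum h' {1..q} + q = m" using h unfolding S_def by simp
      then have "sum h' {1..q} = m - q" by linarith
      moreover have "\<forall>i\<in>{1..q}. h' (Suc i) \<le> h' i \<and> (i \<in> D - {q} \<longrightarrow> h' (Suc i) < h' i)"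
      proof
        fix i assume i: "i \<in> {1..q}"
        show "h' (Suc i) \<le> h' i \<and> (i \<in> D - {q} \<longrightarrow> h' (Suc i) < h' i)"
        proof (cases "i = q")
          case True then show ?thesis unfolding h'_def by auto
        next
          case False
          then have "Suc i \<in> {1..q}" using i by auto
          then show ?thesis using h i pos unfolding h'_def S_def by force
        qed
      qed
      ultimately show ?thesis unfolding S_def h'_def by auto
    qed
    ultimately show "h \<in> plus1 q ` S q (D - {q}) (m - q)" by blast
  qed
next
  show "plus1 q ` S q (D - {q}) (m - q) \<subseteq> {h \<in> S q D m. 0 < h q}"
  proof
    fix h assume "h \<in> plus1 q ` S q (D - {q}) (m - q)"
    then obtain h' where h': "h' \<in> S q (D - {q}) (m - q)" and hh: "h = plus1 q h'" by blast
    have "sum h {1..q} = sum (\<lambda>i. h' i + 1) {1..q}" unfolding hh plus1_def by (intro sum.cong) auto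
    also have "\<dots> = sum h' {1..q} + sum (\<lambda>i. 1) {1..q}" by (rule sum.distrib)
    also have "\<dots> = sum h' {1..q} + q" by simp
    finally have sm: "sum h {1..q} = m" using h' assms unfolding S_def by simp
    have "\<forall>i\<in>{1..q}. h (Suc i) \<le> h i \<and> (i \<in> D \<longrightarrow> h (Suc i) < h i)"
    proof
      fix i assume i: "i \<in> {1..q}"
      show "h (Suc i) \<le> h i \<and> (i \<in> D \<longrightarrow> h (Suc i) < h i)"
      proof (cases "i = q")
        case True then show ?thesis using i unfolding hh plus1_def by auto
      next
        case False
        then have "Suc i \<in> {1..q}" using i by auto
        then show ?thesis using h' i False unfolding hh plus1_def S_def by force
      qed
    qed
    moreover have "0 < h q" using h' assms(3) unfolding hh plus1_def S_def by auto
    ultimately show "h \<in> {h \<in> S q D m. 0 < h q}" using sm unfolding S_def hh plus1_def by auto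
  qed
qed

lemma S_pos_part_empty:
  assumes "m < q"
  shows "{h \<in> S q D m. 0 < h q} = {}"
proof -
  { fix h assume h: "h \<in> S q D m" "0 < h q"
    have pos: "\<forall>i\<in>{1..q}. 1 \<le> h i"
    proof
      fix i assume "i \<in> {1..q}"
      then have "h q \<le> h i" using S_mono[of q h i q] h unfolding S_def by auto
      then show "1 \<le> h i" using h by simp
    qed
    have "q = sum (\<lambda>i. 1) {1..q}" by simp
    also have "\<dots> \<le> sum h {1..q}" using pos by (intro sum_mono) auto
    finally have False using h assms unfolding S_def by simp }
  then show ?thesis by blast
qed

lemma inj_plus1: "inj_on (plus1 q) (S q D m)"
proof
  fix h1 h2 assume h: "h1 \<in> S q D m" "h2 \<in> S q D m" "plus1 q h1 = plus1 q h2"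
  show "h1 = h2"
  proof
    fix i show "h1 i = h2 i"
      using h fun_cong[OF h(3), of i] unfolding S_def plus1_def by (cases "i \<in> {1..q}") auto
  qed
qed

lemma card_S_pos:
  assumes "D \<subseteq> {1..q}" "1 \<le> q"
  shows "card {h \<in> S q D m. 0 < h q} = (if q \<le> m then card (S q (D - {q}) (m - q)) else 0)"
proof (cases "q \<le> m")
  case True then show ?thesis using S_pos_part[OF assms(1) _ assms(2)] card_image[OF inj_plus1] by auto
next
  case False then show ?thesis by (subst S_pos_part_empty) auto
qed

lemma S_zero_part:
  assumes "D \<subseteq> {1..q}" "Suc q \<notin> D"
  shows "{h \<in> S (Suc q) D m. h (Suc q) = 0} = S q D m"
proof
  show "{h \<in> S (Suc q) D m. h (Suc q) = 0} \<subseteq> S q D m"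
  proof
    fix h assume h: "h \<in> {h \<in> S (Suc q) D m. h (Suc q) = 0}"
    have "sum h {1..Suc q} = sum h {1..q} + h (Suc q)" by simp
    then show "h \<in> S q D m" using h unfolding S_def
      by (auto simp: le_Suc_eq)
  qed
next
  show "S q D m \<subseteq> {h \<in> S (Suc q) D m. h (Suc q) = 0}"
  proof
    fix h assume h: "h \<in> S q D m"
    have "sum h {1..Suc q} = sum h {1..q} + h (Suc q)" by simp
    then show "h \<in> {h \<in> S (Suc q) D m. h (Suc q) = 0}" using h assms unfolding S_def
      by (auto simp: le_Suc_eq)
  qed
qed




definition cnt :: "nat \<Rightarrow> nat set \<Rightarrow> rat fps" where
  "cnt q D = Abs_fps (\<lambda>m. of_nat (card (S q D m)))"

definition Pi_fps :: "nat \<Rightarrow> rat fps" where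
  "Pi_fps q = (\<Prod>i=1..q. (1 - fps_X ^ i))"

lemma card_S_split:
  "card (S q D m) = card {h \<in> S q D m. h q = 0} + card {h \<in> S q D m. 0 < h q}"
proof -
  have "S q D m = {h \<in> S q D m. h q = 0} \<union> {h \<in> S q D m. 0 < h q}" by auto
  moreover have "finite {h \<in> S q D m. h q = 0}" "finite {h \<in> S q D m. 0 < h q}"
    using finite_S by auto
  moreover have "card ({h \<in> S q D m. h q = 0} \<union> {h \<in> S q D m. 0 < h q})
     = card {h \<in> S q D m. h q = 0} + card {h \<in> S q D m. 0 < h q}"
    by (rule card_Un_disjoint) (use finite_S in auto)
  ultimately show ?thesis by simp
qed

lemma S_0: "S 0 {} m = (if m = 0 then {\<lambda>_. 0} else {})"
proof (cases "m = 0")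
  case True
  have "S 0 {} 0 = {\<lambda>_. 0}"
  proof
    show "S 0 {} 0 \<subseteq> {\<lambda>_. 0}" unfolding S_def by auto
    show "{\<lambda>_. 0} \<subseteq> S 0 {} 0" unfolding S_def by auto
  qed
  then show ?thesis using True by simp
next
  case False
  then show ?thesis unfolding S_def by auto
qed

lemma cnt_0: "cnt 0 {} = 1"
  unfolding cnt_def S_0 by (rule fps_ext) (simp add: fps_one_nth)

lemma Pi_fps_Suc: "Pi_fps (Suc p) = Pi_fps p * (1 - fps_X ^ Suc p)"
  unfolding Pi_fps_def by (simp add: prod.cl_ivl_Suc)

lemma Pi_fps_0th: "Pi_fps p $ 0 = 1"
  by (induction p) (simp_all add: Pi_fps_Suc, simp add: Pi_fps_def)

lemma cnt_notin:
  assumes "D \<subseteq> {1..p}"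
  shows "cnt (Suc p) D = cnt p D + fps_X ^ Suc p * cnt (Suc p) D"
proof (rule fps_ext)
  fix m
  have D': "D \<subseteq> {1..Suc p}" "Suc p \<notin> D" "D - {Suc p} = D" using assms by auto
  have "card (S (Suc p) D m) = card (S p D m) +
      (if Suc p \<le> m then card (S (Suc p) D (m - Suc p)) else 0)"
    using card_S_split[of "Suc p" D m] S_zero_part[OF assms D'(2)] card_S_pos[OF D'(1)] D'(3)
    by simp
  then show "cnt (Suc p) D $ m = (cnt p D + fps_X ^ Suc p * cnt (Suc p) D) $ m"
    unfolding cnt_def by (simp add: fps_X_power_mult_nth del: power_Suc)
qed

lemma cnt_in:
  assumes "D \<subseteq> {1..Suc p}" "Suc p \<in> D"
  shows "cnt (Suc p) D = fps_X ^ Suc p * cnt (Suc p) (D - {Suc p})"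
proof (rule fps_ext)
  fix m
  have "{h \<in> S (Suc p) D m. h (Suc p) = 0} = {}" using assms unfolding S_def by auto
  then have "card {h \<in> S (Suc p) D m. h (Suc p) = 0} = 0" by (simp only: card.empty)
  then have "card (S (Suc p) D m) = 
      (if Suc p \<le> m then card (S (Suc p) (D - {Suc p}) (m - Suc p)) else 0)"
    using card_S_split[of "Suc p" D m] card_S_pos[OF assms(1)] by simp
  then show "cnt (Suc p) D $ m = (fps_X ^ Suc p * cnt (Suc p) (D - {Suc p})) $ m"
    unfolding cnt_def by (simp add: fps_X_power_mult_nth del: power_Suc)
qed

lemma cnt_formula:
  "D \<subseteq> {1..q} \<Longrightarrow> cnt q D = fps_X ^ (\<Sum>D) * inverse (Pi_fps q)"
proof (induction q arbitrary: D)
  case 0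
  then have "D = {}" by auto
  then show ?case using cnt_0 by (simp add: Pi_fps_def)
next
  case (Suc p)
  have A: "cnt (Suc p) D' = fps_X ^ (\<Sum>D') * inverse (Pi_fps (Suc p))" if D': "D' \<subseteq> {1..p}" for D'
  proof -
    let ?c = "cnt (Suc p) D'"
    let ?u = "1 - fps_X ^ Suc p :: rat fps"
    have u0: "?u $ 0 \<noteq> 0" by simp
    have e1: "?c - fps_X ^ Suc p * ?c = cnt p D'"
      using cnt_notin[OF D'] by (metis add_diff_cancel_right')
    have "?c * ?u = ?c - fps_X ^ Suc p * ?c" by (simp add: algebra_simps)
    also have "\<dots> = cnt p D'" using e1 .
    finally have "?c * ?u = cnt p D'" .
    also have "\<dots> = fps_X ^ (\<Sum>D') * inverse (Pi_fps p)" using Suc.IH[OF D'] .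
    finally have eq: "?c * ?u = fps_X ^ (\<Sum>D') * inverse (Pi_fps p)" .
    have "?c = ?c * ?u * inverse ?u" using inverse_mult_eq_1'[OF u0] by (simp add: mult.assoc)
    also have "\<dots> = fps_X ^ (\<Sum>D') * (inverse (Pi_fps p) * inverse ?u)" using eq by (simp add: mult.assoc)
    also have "\<dots> = fps_X ^ (\<Sum>D') * inverse (Pi_fps (Suc p))"
      by (simp add: Pi_fps_Suc fps_inverse_mult)
    finally show ?thesis .
  qed
  show ?case
  proof (cases "Suc p \<in> D")
    case False
    then have "D \<subseteq> {1..p}" using Suc.prems by (auto simp: le_Suc_eq)
    then show ?thesis using A by simp
  next
    case True
    have D2: "D - {Suc p} \<subseteq> {1..p}" using Suc.prems by (auto simp: le_Suc_eq)
    have fin: "finite D" using Suc.prems finite_subset by blast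
    have "cnt (Suc p) D = fps_X ^ Suc p * cnt (Suc p) (D - {Suc p})" using cnt_in[OF Suc.prems True] .
    also have "\<dots> = fps_X ^ Suc p * fps_X ^ (\<Sum>(D - {Suc p})) * inverse (Pi_fps (Suc p))"
      using A[OF D2] by (simp add: mult.assoc)
    also have "\<dots> = fps_X ^ (\<Sum>D) * inverse (Pi_fps (Suc p))"
      using sum.remove[OF fin True, of "\<lambda>x. x"] by (simp add: power_add)
    finally show ?thesis .
  qed
qed




lemma rank_props:
  assumes fin: "finite P" and irr: "\<forall>x\<in>P. \<not> r x x"
    and tr: "\<forall>x\<in>P. \<forall>y\<in>P. \<forall>z\<in>P. r x y \<longrightarrow> r y z \<longrightarrow> r x z"
    and tot: "\<forall>x\<in>P. \<forall>y\<in>P. x \<noteq> y \<longrightarrow> r x y \<or> r y x"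
  shows "\<And>x y. x \<in> P \<Longrightarrow> y \<in> P \<Longrightarrow> r x y \<Longrightarrow> card {z\<in>P. r z x} < card {z\<in>P. r z y}"
    and "bij_betw (\<lambda>x. Suc (card {z\<in>P. r z x})) P {1..card P}"
proof -
  show lt: "card {z\<in>P. r z x} < card {z\<in>P. r z y}" if xy: "x \<in> P" "y \<in> P" "r x y" for x y
  proof (rule psubset_card_mono)
    show "finite {z\<in>P. r z y}" using fin by simp
    have "{z\<in>P. r z x} \<subseteq> {z\<in>P. r z y}"
    proof
      fix z assume "z \<in> {z\<in>P. r z x}"
      then have "z \<in> P" "r z x" by auto
      then have "r z y" using tr xy by blast
      then show "z \<in> {z\<in>P. r z y}" using \<open>z \<in> P\<close> by simp
    qed
    moreover have "x \<in> {z\<in>P. r z y}" "x \<notin> {z\<in>P. r z x}" using xy irr by auto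
    ultimately show "{z\<in>P. r z x} \<subset> {z\<in>P. r z y}" by blast
  qed
  let ?rk = "\<lambda>x. Suc (card {z\<in>P. r z x})"
  have inj: "inj_on ?rk P"
  proof
    fix x y assume xy: "x \<in> P" "y \<in> P" "?rk x = ?rk y"
    show "x = y"
    proof (rule ccontr)
      assume "x \<noteq> y"
      then have "r x y \<or> r y x" using tot xy by blast
      then have "card {z\<in>P. r z x} < card {z\<in>P. r z y} \<or> card {z\<in>P. r z y} < card {z\<in>P. r z x}"
        using lt xy by blast
      then show False using xy(3) by simp
    qed
  qed
  have sub: "?rk ` P \<subseteq> {1..card P}"
  proof
    fix k assume "k \<in> ?rk ` P"
    then obtain x where x: "x \<in> P" "k = ?rk x" by blast
    have "{z\<in>P. r z x} \<subseteq> P - {x}" using irr x by auto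
    then have "card {z\<in>P. r z x} \<le> card (P - {x})" using fin by (intro card_mono) auto
    also have "\<dots> = card P - 1" using x fin by simp
    finally have a: "card {z\<in>P. r z x} \<le> card P - 1" .
    have "0 < card P" using x fin card_gt_0_iff by blast
    then show "k \<in> {1..card P}" using a x(2) by simp
  qed
  have "card (?rk ` P) = card {1..card P}" using card_image[OF inj] by simp
  then have "?rk ` P = {1..card P}" using sub by (intro card_subset_eq) auto
  then show "bij_betw ?rk P {1..card P}" using inj unfolding bij_betw_def by blast
qed

lemma card_below:
  assumes bij: "bij_betw g P {1..card P}" and x: "x \<in> P"
  shows "g x = Suc (card {y\<in>P. g y < g x})"
proof -
  have gx: "g x \<in> {1..card P}" using bij_betwE[OF bij] x by blast
  have "g ` {y\<in>P. g y < g x} = {1..<g x}"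
  proof
    show "g ` {y\<in>P. g y < g x} \<subseteq> {1..<g x}"
    proof
      fix k assume "k \<in> g ` {y\<in>P. g y < g x}"
      then obtain y where y: "y \<in> P" "g y < g x" "k = g y" by blast
      have "g y \<in> {1..card P}" using bij_betwE[OF bij] y(1) by blast
      then show "k \<in> {1..<g x}" using y by simp
    qed
    show "{1..<g x} \<subseteq> g ` {y\<in>P. g y < g x}"
    proof
      fix k assume k: "k \<in> {1..<g x}"
      then have "k \<in> {1..card P}" using gx by simp
      then have "k \<in> g ` P" using bij unfolding bij_betw_def by simp
      then obtain y where "y \<in> P" "g y = k" by blast
      then show "k \<in> g ` {y\<in>P. g y < g x}" using k by auto
    qed
  qed
  moreover have "inj_on g P" using bij by (simp add: bij_betw_def)
  then have "inj_on g {y\<in>P. g y < g x}" by (rule inj_on_subset) blast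
  then have "card (g ` {y\<in>P. g y < g x}) = card {y\<in>P. g y < g x}" by (rule card_image)
  ultimately have "card {y\<in>P. g y < g x} = card {1..<g x}" by simp
  then show ?thesis using gx by simp
qed

lemma chain:
  fixes h \<sigma> :: "nat \<Rightarrow> nat"
  assumes adj: "\<forall>i\<in>{1..<p}. h (Suc i) \<le> h i \<and> (\<sigma> (Suc i) < \<sigma> i \<longrightarrow> h (Suc i) < h i)"
    and inj: "inj_on \<sigma> {1..p}" and i1: "1 \<le> i"
  shows "i < j \<Longrightarrow> j \<le> p \<Longrightarrow> h j < h i \<or> (h j = h i \<and> \<sigma> i < \<sigma> j)"
proof (induction j)
  case 0 then show ?case by simp
next
  case (Suc j)
  have jj: "j \<in> {1..<p}" using Suc.prems i1 by simp
  have "j \<in> {1..p}" "Suc j \<in> {1..p}" using jj Suc.prems by auto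
  then have ne: "\<sigma> j \<noteq> \<sigma> (Suc j)" using inj_on_contraD[OF inj, of j "Suc j"] by simp
  have a: "h (Suc j) \<le> h j" "\<sigma> (Suc j) < \<sigma> j \<longrightarrow> h (Suc j) < h j" using adj jj by auto
  have step: "h (Suc j) < h j \<or> (h (Suc j) = h j \<and> \<sigma> j < \<sigma> (Suc j))"
    using a ne by linarith
  show ?case
  proof (cases "i = j")
    case True then show ?thesis using step by simp
  next
    case False
    then have "h j < h i \<or> (h j = h i \<and> \<sigma> i < \<sigma> j)" using Suc by simp
    then show ?thesis using step by linarith
  qed
qed




definition rel :: "('a \<Rightarrow> nat) \<Rightarrow> ('a \<Rightarrow> nat) \<Rightarrow> 'a \<Rightarrow> 'a \<Rightarrow> bool" where
  "rel f \<omega> x y \<longleftrightarrow> f y < f x \<or> (f y = f x \<and> \<omega> x < \<omega> y)"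

definition C :: "'a set \<Rightarrow> ('a \<Rightarrow> nat) \<Rightarrow> ('a \<Rightarrow> nat) \<Rightarrow> nat \<Rightarrow> ('a \<Rightarrow> nat) set" where
  "C P \<omega> g m = {f. (\<forall>x. x \<notin> P \<longrightarrow> f x = 0) \<and> (\<forall>x\<in>P. \<forall>y\<in>P. g x < g y \<longrightarrow> rel f \<omega> x y)
     \<and> sum f P = m}"

definition LS :: "('a \<Rightarrow> 'a \<Rightarrow> bool) \<Rightarrow> 'a set \<Rightarrow> 'a \<Rightarrow> ('a \<Rightarrow> nat) set" where
  "LS le P s = {g. linear_extension le P g \<and> g s = card P}"

definition Dg :: "'a set \<Rightarrow> ('a \<Rightarrow> nat) \<Rightarrow> ('a \<Rightarrow> nat) \<Rightarrow> nat set" where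
  "Dg P \<omega> g = {i\<in>{1..<card P}. word P \<omega> g (Suc i) < word P \<omega> g i}"

lemma le_bij: "linear_extension le P g \<Longrightarrow> bij_betw g P {1..card P}"
  unfolding linear_extension_def by simp

lemma le_inv:
  assumes "linear_extension le P g" "i \<in> {1..card P}"
  shows "inv_into P g i \<in> P" "g (inv_into P g i) = i"
proof -
  have "i \<in> g ` P" using le_bij[OF assms(1)] assms(2) unfolding bij_betw_def by simp
  then show "inv_into P g i \<in> P" "g (inv_into P g i) = i" by (rule inv_into_into, rule f_inv_into_f)
qed

lemma le_invf:
  assumes "linear_extension le P g" "x \<in> P"
  shows "inv_into P g (g x) = x"
proof -
  have "inj_on g P" using le_bij[OF assms(1)] unfolding bij_betw_def by simp
  then show ?thesis using assms(2) by (rule inv_into_f_f)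
qed

lemma le_range:
  assumes "linear_extension le P g" "x \<in> P"
  shows "g x \<in> {1..card P}"
  using bij_betwE[OF le_bij[OF assms(1)]] assms(2) by blast

lemma omega_inj: "labeled_poset le P \<omega> \<Longrightarrow> inj_on \<omega> P"
  unfolding labeled_poset_def bij_betw_def by simp

lemma word_inj:
  assumes lp: "labeled_poset le P \<omega>" and g: "linear_extension le P g"
  shows "inj_on (word P \<omega> g) {1..card P}"
proof
  fix i j assume i: "i \<in> {1..card P}" and j: "j \<in> {1..card P}" and e: "word P \<omega> g i = word P \<omega> g j"
  have "\<omega> (inv_into P g i) = \<omega> (inv_into P g j)" using e unfolding word_def .
  then have "inv_into P g i = inv_into P g j"
    using inj_onD[OF omega_inj[OF lp]] le_inv(1)[OF g i] le_inv(1)[OF g j] by blast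
  then show "i = j" using le_inv(2)[OF g i] le_inv(2)[OF g j] by metis
qed

lemma disj:
  assumes g1: "linear_extension le P g1" and g2: "linear_extension le P g2"
    and f1: "f \<in> C P \<omega> g1 m" and f2: "f \<in> C P \<omega> g2 m"
  shows "g1 = g2"
proof
  fix x
  have rx: "\<And>x y. x \<in> P \<Longrightarrow> y \<in> P \<Longrightarrow> g1 x < g1 y \<Longrightarrow> rel f \<omega> x y" using f1 unfolding C_def by blast
  have ry: "\<And>x y. x \<in> P \<Longrightarrow> y \<in> P \<Longrightarrow> g2 x < g2 y \<Longrightarrow> rel f \<omega> x y" using f2 unfolding C_def by blast
  have asym: "\<not> (rel f \<omega> x y \<and> rel f \<omega> y x)" for x y unfolding rel_def by linarith
  have inj1: "inj_on g1 P" using le_bij[OF g1] unfolding bij_betw_def by simp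
  have inj2: "inj_on g2 P" using le_bij[OF g2] unfolding bij_betw_def by simp
  have eqv: "g1 y < g1 z \<longleftrightarrow> g2 y < g2 z" if yz: "y \<in> P" "z \<in> P" for y z
  proof
    assume a: "g1 y < g1 z"
    show "g2 y < g2 z"
    proof (rule ccontr)
      assume "\<not> g2 y < g2 z"
      moreover have "y \<noteq> z" using a by auto
      then have "g2 y \<noteq> g2 z" using inj_onD[OF inj2] yz by blast
      ultimately have "g2 z < g2 y" by simp
      then show False using rx[OF yz a] ry[OF yz(2,1)] asym by blast
    qed
  next
    assume a: "g2 y < g2 z"
    show "g1 y < g1 z"
    proof (rule ccontr)
      assume "\<not> g1 y < g1 z"
      moreover have "y \<noteq> z" using a by auto
      then have "g1 y \<noteq> g1 z" using inj_onD[OF inj1] yz by blast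
      ultimately have "g1 z < g1 y" by simp
      then show False using ry[OF yz a] rx[OF yz(2,1)] asym by blast
    qed
  qed
  show "g1 x = g2 x"
  proof (cases "x \<in> P")
    case True
    have "{y\<in>P. g1 y < g1 x} = {y\<in>P. g2 y < g2 x}" using eqv True by blast
    then show ?thesis using card_below[OF le_bij[OF g1] True] card_below[OF le_bij[OF g2] True] by simp
  next
    case False
    then show ?thesis using g1 g2 unfolding linear_extension_def by simp
  qed
qed

lemma cardC:
  assumes lp: "labeled_poset le P \<omega>" and g: "linear_extension le P g"
  shows "card (C P \<omega> g m) = card (S (card P) (Dg P \<omega> g) m)"
proof -
  let ?p = "card P"
  let ?D = "Dg P \<omega> g"
  let ?\<sigma> = "word P \<omega> g"
  define \<Phi> where "\<Phi> f = (\<lambda>i. if i \<in> {1..?p} then f (inv_into P g i) else 0)" for f :: "'a \<Rightarrow> nat"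
  have bijinv: "bij_betw (inv_into P g) {1..?p} P" using le_bij[OF g] by (rule bij_betw_inv_into)
  have inj: "inj_on \<Phi> (C P \<omega> g m)"
  proof
    fix f1 f2 assume f1: "f1 \<in> C P \<omega> g m" and f2: "f2 \<in> C P \<omega> g m" and e: "\<Phi> f1 = \<Phi> f2"
    show "f1 = f2"
    proof
      fix x
      show "f1 x = f2 x"
      proof (cases "x \<in> P")
        case True
        have "\<Phi> f1 (g x) = \<Phi> f2 (g x)" using e by simp
        then show ?thesis using le_range[OF g True] le_invf[OF g True] unfolding \<Phi>_def by simp
      next
        case False then show ?thesis using f1 f2 unfolding C_def by simp
      qed
    qed
  qed
  have img: "\<Phi> ` C P \<omega> g m = S ?p ?D m"
  proof
    show "\<Phi> ` C P \<omega> g m \<subseteq> S ?p ?D m"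
    proof
      fix h assume "h \<in> \<Phi> ` C P \<omega> g m"
      then obtain f where f: "f \<in> C P \<omega> g m" and hf: "h = \<Phi> f" by blast
      have r: "\<And>x y. x \<in> P \<Longrightarrow> y \<in> P \<Longrightarrow> g x < g y \<Longrightarrow> rel f \<omega> x y" using f unfolding C_def by blast
      have z: "\<forall>i. i \<notin> {1..?p} \<longrightarrow> h i = 0" unfolding hf \<Phi>_def by simp
      have a: "\<forall>i\<in>{1..?p}. h (Suc i) \<le> h i \<and> (i \<in> ?D \<longrightarrow> h (Suc i) < h i)"
      proof
        fix i assume i: "i \<in> {1..?p}"
        show "h (Suc i) \<le> h i \<and> (i \<in> ?D \<longrightarrow> h (Suc i) < h i)"
        proof (cases "i = ?p")
          case True
          then have "i \<notin> ?D" unfolding Dg_def by simp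
          moreover have "h (Suc i) = 0" using True unfolding hf \<Phi>_def by simp
          ultimately show ?thesis by simp
        next
          case False
          then have i2: "Suc i \<in> {1..?p}" using i by simp
          let ?x = "inv_into P g i" and ?y = "inv_into P g (Suc i)"
          have xP: "?x \<in> P" "g ?x = i" using le_inv[OF g i] by auto
          have yP: "?y \<in> P" "g ?y = Suc i" using le_inv[OF g i2] by auto
          have "rel f \<omega> ?x ?y" using r[OF xP(1) yP(1)] xP(2) yP(2) by simp
          then have rr: "f ?y < f ?x \<or> (f ?y = f ?x \<and> \<omega> ?x < \<omega> ?y)" unfolding rel_def .
          have hi: "h i = f ?x" "h (Suc i) = f ?y" using i i2 unfolding hf \<Phi>_def by auto
          have "i \<in> ?D \<longleftrightarrow> \<omega> ?y < \<omega> ?x" using i False unfolding Dg_def word_def by auto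
          then show ?thesis using rr hi by auto
        qed
      qed
      have "sum h {1..?p} = sum (\<lambda>i. f (inv_into P g i)) {1..?p}" unfolding hf \<Phi>_def by simp
      also have "\<dots> = sum f P" using bijinv by (rule sum.reindex_bij_betw)
      also have "\<dots> = m" using f unfolding C_def by simp
      finally show "h \<in> S ?p ?D m" using z a unfolding S_def by blast
    qed
  next
    show "S ?p ?D m \<subseteq> \<Phi> ` C P \<omega> g m"
    proof
      fix h assume h: "h \<in> S ?p ?D m"
      define f where "f x = (if x \<in> P then h (g x) else 0)" for x
      have "\<Phi> f = h"
      proof
        fix i show "\<Phi> f i = h i"
        proof (cases "i \<in> {1..?p}")
          case True
          then show ?thesis using le_inv[OF g True] unfolding \<Phi>_def f_def by simp
        next
          case False
          then have "\<Phi> f i = 0" unfolding \<Phi>_def by (rule if_not_P)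
          moreover have "h i = 0" using h False unfolding S_def by blast
          ultimately show ?thesis by simp
        qed
      qed
      moreover have "f \<in> C P \<omega> g m"
      proof -
        have z: "\<forall>x. x \<notin> P \<longrightarrow> f x = 0" unfolding f_def by simp
        have adj: "\<forall>i\<in>{1..<?p}. h (Suc i) \<le> h i \<and> (?\<sigma> (Suc i) < ?\<sigma> i \<longrightarrow> h (Suc i) < h i)"
        proof
          fix i assume i: "i \<in> {1..<?p}"
          then have "i \<in> {1..?p}" by simp
          then have "h (Suc i) \<le> h i \<and> (i \<in> ?D \<longrightarrow> h (Suc i) < h i)" using h unfolding S_def by blast
          moreover have "i \<in> ?D \<longleftrightarrow> ?\<sigma> (Suc i) < ?\<sigma> i" using i unfolding Dg_def by simp
          ultimately show "h (Suc i) \<le> h i \<and> (?\<sigma> (Suc i) < ?\<sigma> i \<longrightarrow> h (Suc i) < h i)" by simp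
        qed
        have r: "\<forall>x\<in>P. \<forall>y\<in>P. g x < g y \<longrightarrow> rel f \<omega> x y"
        proof (intro ballI impI)
          fix x y assume x: "x \<in> P" and y: "y \<in> P" and xy: "g x < g y"
          have gx: "g x \<in> {1..?p}" and gy: "g y \<in> {1..?p}" using le_range[OF g] x y by auto
          have "h (g y) < h (g x) \<or> (h (g y) = h (g x) \<and> ?\<sigma> (g x) < ?\<sigma> (g y))"
            using chain[OF adj word_inj[OF lp g], of "g x" "g y"] gx gy xy by simp
          moreover have "?\<sigma> (g x) = \<omega> x" "?\<sigma> (g y) = \<omega> y"
            unfolding word_def using le_invf[OF g] x y by auto
          ultimately show "rel f \<omega> x y" unfolding rel_def f_def using x y by simp
        qed
        have "sum f P = sum (\<lambda>x. h (g x)) P" unfolding f_def by simp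
        also have "\<dots> = sum h {1..?p}" using le_bij[OF g] by (rule sum.reindex_bij_betw)
        also have "\<dots> = m" using h unfolding S_def by simp
        finally show ?thesis using z r unfolding C_def by blast
      qed
      ultimately show "h \<in> \<Phi> ` C P \<omega> g m" by blast
    qed
  qed
  show ?thesis using card_image[OF inj] img by simp
qed




lemma union_sub1:
  assumes lp: "labeled_poset le P \<omega>" and s: "s \<in> P"
    and fp: "P_omega_s_partition le P \<omega> s f" and fm: "sum f P = m"
  shows "\<exists>g\<in>LS le P s. f \<in> C P \<omega> g m"
proof -
  have fin: "finite P" using lp unfolding labeled_poset_def by simp
  have injw: "inj_on \<omega> P" using omega_inj[OF lp] .
  have z: "\<forall>x. x \<notin> P \<longrightarrow> f x = 0" using fp unfolding P_omega_s_partition_def P_omega_partition_def by blast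
  have mono: "\<And>x y. x \<in> P \<Longrightarrow> y \<in> P \<Longrightarrow> le x y \<Longrightarrow> f y \<le> f x"
    using fp unfolding P_omega_s_partition_def P_omega_partition_def by blast
  have strict: "\<And>x y. x \<in> P \<Longrightarrow> y \<in> P \<Longrightarrow> le x y \<Longrightarrow> \<omega> y < \<omega> x \<Longrightarrow> f y < f x"
    using fp unfolding P_omega_s_partition_def P_omega_partition_def by blast
  have smin: "\<And>t. t \<in> P \<Longrightarrow> f s \<le> f t" using fp unfolding P_omega_s_partition_def by blast
  have tie: "\<And>t. t \<in> P \<Longrightarrow> f s = f t \<Longrightarrow> t \<noteq> s \<Longrightarrow> \<omega> t < \<omega> s"
    using fp unfolding P_omega_s_partition_def by blast
  let ?r = "rel f \<omega>"
  have irr: "\<forall>x\<in>P. \<not> ?r x x" unfolding rel_def by simp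
  have tr: "\<forall>x\<in>P. \<forall>y\<in>P. \<forall>z\<in>P. ?r x y \<longrightarrow> ?r y z \<longrightarrow> ?r x z"
  proof (intro ballI impI)
    fix x y z assume "?r x y" "?r y z"
    then show "?r x z" unfolding rel_def by linarith
  qed
  have tot: "\<forall>x\<in>P. \<forall>y\<in>P. x \<noteq> y \<longrightarrow> ?r x y \<or> ?r y x"
  proof (intro ballI impI)
    fix x y assume "x \<in> P" "y \<in> P" "x \<noteq> y"
    then have "\<omega> x \<noteq> \<omega> y" using inj_onD[OF injw] by blast
    then show "?r x y \<or> ?r y x" unfolding rel_def by linarith
  qed
  note rp = rank_props[OF fin irr tr tot]
  define g where "g x = (if x \<in> P then Suc (card {z\<in>P. ?r z x}) else 0)" for x
  have bij: "bij_betw g P {1..card P}"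
    using rp(2) by (rule bij_betw_cong[THEN iffD1, rotated]) (simp add: g_def)
  have lt: "g x < g y" if "x \<in> P" "y \<in> P" "?r x y" for x y
    using rp(1)[OF that] that unfolding g_def by simp
  have ord: "\<forall>x\<in>P. \<forall>y\<in>P. le x y \<longrightarrow> g x \<le> g y"
  proof (intro ballI impI)
    fix x y assume x: "x \<in> P" and y: "y \<in> P" and xy: "le x y"
    show "g x \<le> g y"
    proof (cases "x = y")
      case True then show ?thesis by simp
    next
      case False
      then have ne: "\<omega> x \<noteq> \<omega> y" using inj_onD[OF injw] x y by blast
      have "f y \<le> f x" using mono[OF x y xy] .
      moreover have "\<omega> y < \<omega> x \<longrightarrow> f y < f x" using strict[OF x y xy] by blast
      ultimately have "?r x y" unfolding rel_def using ne by linarith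
      then show ?thesis using lt x y by fastforce
    qed
  qed
  have le: "linear_extension le P g" unfolding linear_extension_def using bij ord by (simp add: g_def)
  have "{z\<in>P. ?r z s} = P - {s}"
  proof
    show "{z\<in>P. ?r z s} \<subseteq> P - {s}" using irr by blast
    show "P - {s} \<subseteq> {z\<in>P. ?r z s}"
    proof
      fix t assume t: "t \<in> P - {s}"
      then have "f s \<le> f t" "f s = f t \<longrightarrow> \<omega> t < \<omega> s" using smin tie by auto
      then have "?r t s" unfolding rel_def by linarith
      then show "t \<in> {z\<in>P. ?r z s}" using t by simp
    qed
  qed
  moreover have "card (P - {s}) = card P - 1" using s fin by simp
  moreover have "0 < card P" using s fin card_gt_0_iff by blast
  ultimately have gs: "g s = card P" unfolding g_def using s by simp
  have "f \<in> C P \<omega> g m"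
  proof -
    have "\<forall>x\<in>P. \<forall>y\<in>P. g x < g y \<longrightarrow> ?r x y"
    proof (intro ballI impI)
      fix x y assume x: "x \<in> P" and y: "y \<in> P" and xy: "g x < g y"
      show "?r x y"
      proof (rule ccontr)
        assume nr: "\<not> ?r x y"
        have "x \<noteq> y" using xy by auto
        then have "?r y x" using tot x y nr by blast
        then have "g y < g x" using lt x y by blast
        then show False using xy by simp
      qed
    qed
    then show ?thesis unfolding C_def using z fm by blast
  qed
  moreover have "g \<in> LS le P s" unfolding LS_def using le gs by simp
  ultimately show ?thesis by blast
qed

lemma union_sub2:
  assumes lp: "labeled_poset le P \<omega>" and s: "s \<in> P"
    and g: "g \<in> LS le P s" and f: "f \<in> C P \<omega> g m"
  shows "P_omega_s_partition le P \<omega> s f \<and> sum f P = m"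
proof -
  have ge: "linear_extension le P g" and gs: "g s = card P" using g unfolding LS_def by auto
  have injg: "inj_on g P" using le_bij[OF ge] unfolding bij_betw_def by simp
  have ord: "\<And>x y. x \<in> P \<Longrightarrow> y \<in> P \<Longrightarrow> le x y \<Longrightarrow> g x \<le> g y"
    using ge unfolding linear_extension_def by blast
  have r: "\<And>x y. x \<in> P \<Longrightarrow> y \<in> P \<Longrightarrow> g x < g y \<Longrightarrow> rel f \<omega> x y" using f unfolding C_def by blast
  have z: "\<forall>x. x \<notin> P \<longrightarrow> f x = 0" and fm: "sum f P = m" using f unfolding C_def by auto
  have lt: "g x < g y" if "x \<in> P" "y \<in> P" "x \<noteq> y" "g x \<le> g y" for x y
  proof -
    have "g x \<noteq> g y" using inj_onD[OF injg] that by blast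
    then show ?thesis using that by simp
  qed
  have part: "P_omega_partition le P \<omega> f"
    unfolding P_omega_partition_def
  proof (intro conjI ballI impI)
    show "\<forall>x. x \<notin> P \<longrightarrow> f x = 0" using z .
  next
    fix x y assume x: "x \<in> P" and y: "y \<in> P" and xy: "le x y"
    show "f y \<le> f x"
    proof (cases "x = y")
      case False
      then have "rel f \<omega> x y" using r lt ord x y xy by blast
      then show ?thesis unfolding rel_def by linarith
    qed simp
  next
    fix x y assume x: "x \<in> P" and y: "y \<in> P" and xy: "le x y \<and> \<omega> y < \<omega> x"
    show "f y < f x"
    proof (cases "x = y")
      case False
      then have "rel f \<omega> x y" using r lt ord x y xy by blast
      then show ?thesis unfolding rel_def using xy by linarith
    next
      case True then show ?thesis using xy by simp
    qed
  qed
  have rs: "rel f \<omega> t s" if t: "t \<in> P" "t \<noteq> s" for t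
  proof -
    have "g t \<in> {1..card P}" using le_range[OF ge t(1)] .
    moreover have "g t \<noteq> g s" using inj_onD[OF injg] t s by blast
    ultimately have "g t < g s" using gs by simp
    then show ?thesis using r t s by blast
  qed
  have "\<forall>t\<in>P. f s \<le> f t"
  proof
    fix t assume t: "t \<in> P"
    show "f s \<le> f t"
    proof (cases "t = s")
      case False then show ?thesis using rs[OF t False] unfolding rel_def by linarith
    qed simp
  qed
  moreover have "\<forall>t\<in>P. f s = f t \<and> t \<noteq> s \<longrightarrow> \<omega> t < \<omega> s"
  proof (intro ballI impI)
    fix t assume t: "t \<in> P" and a: "f s = f t \<and> t \<noteq> s"
    then show "\<omega> t < \<omega> s" using rs[OF t] unfolding rel_def by auto
  qed
  ultimately show ?thesis unfolding P_omega_s_partition_def using part fm by blast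
qed

lemma union:
  assumes lp: "labeled_poset le P \<omega>" and s: "s \<in> P"
  shows "{f. P_omega_s_partition le P \<omega> s f \<and> sum f P = m} = (\<Union>g\<in>LS le P s. C P \<omega> g m)"
proof (intro equalityI subsetI)
  fix f assume "f \<in> {f. P_omega_s_partition le P \<omega> s f \<and> sum f P = m}"
  then have "P_omega_s_partition le P \<omega> s f" "sum f P = m" by auto
  then obtain g where "g \<in> LS le P s" "f \<in> C P \<omega> g m" using union_sub1[OF lp s] by blast
  then show "f \<in> (\<Union>g\<in>LS le P s. C P \<omega> g m)" by blast
next
  fix f assume "f \<in> (\<Union>g\<in>LS le P s. C P \<omega> g m)"
  then obtain g where "g \<in> LS le P s" "f \<in> C P \<omega> g m" by (rule UN_E)
  then have "P_omega_s_partition le P \<omega> s f \<and> sum f P = m" by (rule union_sub2[OF lp s])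
  then show "f \<in> {f. P_omega_s_partition le P \<omega> s f \<and> sum f P = m}" by simp
qed

lemma finite_LS:
  assumes lp: "labeled_poset le P \<omega>"
  shows "finite (LS le P s)"
proof -
  have fin: "finite P" using lp unfolding labeled_poset_def by simp
  have "LS le P s \<subseteq> {f. (\<forall>x. x \<notin> P \<longrightarrow> f x = 0) \<and> (\<forall>x\<in>P. f x \<le> card P)}"
  proof
    fix g assume "g \<in> LS le P s"
    then have g: "linear_extension le P g" unfolding LS_def by simp
    then have "\<forall>x\<in>P. g x \<le> card P" using le_range[OF g] by auto
    moreover have "\<forall>x. x \<notin> P \<longrightarrow> g x = 0" using g unfolding linear_extension_def by simp
    ultimately show "g \<in> {f. (\<forall>x. x \<notin> P \<longrightarrow> f x = 0) \<and> (\<forall>x\<in>P. f x \<le> card P)}" by simp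
  qed
  then show ?thesis by (rule finite_subset[OF _ finite_bounded_funs[OF fin]])
qed

lemma finite_C:
  assumes fin: "finite P"
  shows "finite (C P \<omega> g m)"
proof -
  have "C P \<omega> g m \<subseteq> {f. (\<forall>x. x \<notin> P \<longrightarrow> f x = 0) \<and> (\<forall>x\<in>P. f x \<le> m)}"
  proof
    fix f assume f: "f \<in> C P \<omega> g m"
    have "\<forall>x\<in>P. f x \<le> m"
    proof
      fix x assume "x \<in> P"
      then have "f x \<le> sum f P" using fin by (simp add: member_le_sum)
      then show "f x \<le> m" using f unfolding C_def by simp
    qed
    then show "f \<in> {f. (\<forall>x. x \<notin> P \<longrightarrow> f x = 0) \<and> (\<forall>x\<in>P. f x \<le> m)}" using f unfolding C_def by simp
  qed
  then show ?thesis by (rule finite_subset[OF _ finite_bounded_funs[OF fin]])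
qed

lemma word_set:
  assumes lp: "labeled_poset le P \<omega>" and s: "s \<in> P"
  shows "{\<sigma>. \<exists>g. linear_extension le P g \<and> \<sigma> = word P \<omega> g} \<inter> {\<sigma>. \<sigma> (card P) = \<omega> s}
     = word P \<omega> ` LS le P s"
proof (intro equalityI subsetI)
  have fin: "finite P" using lp unfolding labeled_poset_def by simp
  have "0 < card P" using s fin card_gt_0_iff by blast
  then have pP: "card P \<in> {1..card P}" by simp
  fix \<sigma> assume "\<sigma> \<in> {\<sigma>. \<exists>g. linear_extension le P g \<and> \<sigma> = word P \<omega> g} \<inter> {\<sigma>. \<sigma> (card P) = \<omega> s}"
  then obtain g where g: "linear_extension le P g" "\<sigma> = word P \<omega> g" and e: "\<sigma> (card P) = \<omega> s" by blast
  have "\<omega> (inv_into P g (card P)) = \<omega> s" using e g(2) unfolding word_def by simp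
  then have "inv_into P g (card P) = s" using inj_onD[OF omega_inj[OF lp] _ le_inv(1)[OF g(1) pP] s] by blast
  then have "g s = card P" using le_inv(2)[OF g(1) pP] by simp
  then have "g \<in> LS le P s" using g unfolding LS_def by simp
  then show "\<sigma> \<in> word P \<omega> ` LS le P s" using g(2) by blast
next
  fix \<sigma> assume "\<sigma> \<in> word P \<omega> ` LS le P s"
  then obtain g where g: "g \<in> LS le P s" "\<sigma> = word P \<omega> g" by blast
  have ge: "linear_extension le P g" and gs: "g s = card P" using g unfolding LS_def by auto
  have "\<sigma> (card P) = \<omega> s" using g(2) le_invf[OF ge s] gs unfolding word_def by simp
  then show "\<sigma> \<in> {\<sigma>. \<exists>g. linear_extension le P g \<and> \<sigma> = word P \<omega> g} \<inter> {\<sigma>. \<sigma> (card P) = \<omega> s}"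
    using ge g(2) by blast
qed

lemma word_inj_LS:
  assumes lp: "labeled_poset le P \<omega>"
  shows "inj_on (word P \<omega>) (LS le P s)"
proof
  fix g1 g2 assume g1: "g1 \<in> LS le P s" and g2: "g2 \<in> LS le P s" and e: "word P \<omega> g1 = word P \<omega> g2"
  have l1: "linear_extension le P g1" and l2: "linear_extension le P g2" using g1 g2 unfolding LS_def by auto
  show "g1 = g2"
  proof
    fix x show "g1 x = g2 x"
    proof (cases "x \<in> P")
      case True
      have r: "g1 x \<in> {1..card P}" using le_range[OF l1 True] .
      have "word P \<omega> g1 (g1 x) = \<omega> x" using le_invf[OF l1 True] unfolding word_def by simp
      then have "word P \<omega> g2 (g1 x) = \<omega> x" using e by simp
      then have "\<omega> (inv_into P g2 (g1 x)) = \<omega> x" unfolding word_def .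
      then have "inv_into P g2 (g1 x) = x" using inj_onD[OF omega_inj[OF lp] _ le_inv(1)[OF l2 r] True] by blast
      then show ?thesis using le_inv(2)[OF l2 r] by simp
    next
      case False then show ?thesis using l1 l2 unfolding linear_extension_def by simp
    qed
  qed
qed

theorem theorem3p3:
  fixes le :: "'a \<Rightarrow> 'a \<Rightarrow> bool" and P :: "'a set" and \<omega> :: "'a \<Rightarrow> nat" and s :: 'a
  assumes "labeled_poset le P \<omega>" and "s \<in> P"
  shows "G_fps le P \<omega> s = e_maj le P \<omega> s / (\<Prod>i=1..card P. (1 - fps_X ^ i))"
proof -
  note lp = assms(1) and s = assms(2)
  have fin: "finite P" using lp unfolding labeled_poset_def by simp
  let ?L = "LS le P s"
  let ?p = "card P"
  have cardG: "card {f. P_omega_s_partition le P \<omega> s f \<and> sum f P = m}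
      = (\<Sum>g\<in>?L. card (S ?p (Dg P \<omega> g) m))" for m
  proof -
    have "card {f. P_omega_s_partition le P \<omega> s f \<and> sum f P = m} = card (\<Union>g\<in>?L. C P \<omega> g m)"
      using union[OF lp s] by simp
    also have "\<dots> = (\<Sum>g\<in>?L. card (C P \<omega> g m))"
    proof (rule card_UN_disjoint)
      show "finite ?L" using finite_LS[OF lp] .
      show "\<forall>g\<in>?L. finite (C P \<omega> g m)" using finite_C[OF fin] by blast
      show "\<forall>g1\<in>?L. \<forall>g2\<in>?L. g1 \<noteq> g2 \<longrightarrow> C P \<omega> g1 m \<inter> C P \<omega> g2 m = {}"
      proof (intro ballI impI)
        fix g1 g2 assume g1: "g1 \<in> ?L" and g2: "g2 \<in> ?L" and ne: "g1 \<noteq> g2"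
        have l1: "linear_extension le P g1" and l2: "linear_extension le P g2" using g1 g2 unfolding LS_def by auto
        show "C P \<omega> g1 m \<inter> C P \<omega> g2 m = {}"
        proof (rule ccontr)
          assume "C P \<omega> g1 m \<inter> C P \<omega> g2 m \<noteq> {}"
          then obtain f where "f \<in> C P \<omega> g1 m" "f \<in> C P \<omega> g2 m" by blast
          then have "g1 = g2" by (rule disj[OF l1 l2])
          then show False using ne by simp
        qed
      qed
    qed
    also have "\<dots> = (\<Sum>g\<in>?L. card (S ?p (Dg P \<omega> g) m))"
    proof (rule sum.cong)
      fix g assume "g \<in> ?L"
      then have "linear_extension le P g" unfolding LS_def by simp
      then show "card (C P \<omega> g m) = card (S ?p (Dg P \<omega> g) m)" by (rule cardC[OF lp])
    qed simp
    finally show ?thesis .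
  qed
  have "G_fps le P \<omega> s = (\<Sum>g\<in>?L. cnt ?p (Dg P \<omega> g))"
    by (rule fps_ext) (simp add: G_fps_def cnt_def fps_sum_nth cardG)
  also have "\<dots> = (\<Sum>g\<in>?L. fps_X ^ maj ?p (word P \<omega> g) * inverse (Pi_fps ?p))"
  proof (rule sum.cong)
    fix g assume "g \<in> ?L"
    have "Dg P \<omega> g \<subseteq> {1..?p}" unfolding Dg_def by auto
    then have "cnt ?p (Dg P \<omega> g) = fps_X ^ (\<Sum>(Dg P \<omega> g)) * inverse (Pi_fps ?p)" by (rule cnt_formula)
    moreover have "\<Sum>(Dg P \<omega> g) = maj ?p (word P \<omega> g)" unfolding Dg_def maj_def by simp
    ultimately show "cnt ?p (Dg P \<omega> g) = fps_X ^ maj ?p (word P \<omega> g) * inverse (Pi_fps ?p)" by simp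
  qed simp
  also have "\<dots> = (\<Sum>g\<in>?L. fps_X ^ maj ?p (word P \<omega> g)) * inverse (Pi_fps ?p)"
    by (simp add: sum_distrib_right)
  also have "(\<Sum>g\<in>?L. fps_X ^ maj ?p (word P \<omega> g)) = e_maj le P \<omega> s"
  proof -
    have "e_maj le P \<omega> s = (\<Sum>\<sigma>\<in>word P \<omega> ` ?L. fps_X ^ maj ?p \<sigma>)"
      unfolding e_maj_def using word_set[OF lp s] by simp
    also have "\<dots> = (\<Sum>g\<in>?L. fps_X ^ maj ?p (word P \<omega> g))"
      using sum.reindex[OF word_inj_LS[OF lp]] by simp
    finally show ?thesis by simp
  qed
  also have "e_maj le P \<omega> s * inverse (Pi_fps ?p) = e_maj le P \<omega> s / (\<Prod>i=1..card P. (1 - fps_X ^ i))"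
    unfolding Pi_fps_def[symmetric] using Pi_fps_0th[of ?p] by (simp add: fps_divide_unit)
  finally show ?thesis .
qed



end
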